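(* Let $i\colon Y\to X$ be a continuous bijection between topological spaces. If $X$ is homeomorphic to a subspace of a separable Hausdorff space, then so is $Y$. *)

theory Defs
  imports "HOL-Analysis.Analysis"
begin

definition embeds_in_sep_Hausdorff :: "'c itself \<Rightarrow> 'a topology \<Rightarrow> bool" where
  "embeds_in_sep_Hausdorff _ X \<longleftrightarrow>
     (\<exists>(Z::'c topology) S. separable_space Z \<and> Hausdorff_space Z \<and> S \<subseteq> topspace Z \<and>
        X homeomorphic_space subtopology Z S)"

end

theory Submission
  imports Defs
begin

lemma transfer_top:
  fixes W :: "'d topology" and \<phi> :: "'d \<Rightarrow> 'e"
  assumes inj: "inj_on \<phi> (topspace W)"
  shows "\<exists>W'::'e topology. homeomorphic_map W W' \<phi>"
proof -
  define P where "P = (\<lambda>U. \<exists>V. openin W V \<and> U = \<phi> ` V)"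
  have img_int: "\<phi> ` (A \<inter> B) = \<phi> ` A \<inter> \<phi> ` B" if "A \<subseteq> topspace W" "B \<subseteq> topspace W" for A B
    using inj that unfolding inj_on_def by blast
  have top: "istopology P"
    unfolding istopology_def
  proof (intro conjI allI impI)
    fix S T assume "P S" "P T"
    then obtain V1 V2 where "openin W V1" "S = \<phi> ` V1" "openin W V2" "T = \<phi> ` V2"
      unfolding P_def by blast
    moreover have "\<phi> ` (V1 \<inter> V2) = \<phi> ` V1 \<inter> \<phi> ` V2"
      using img_int openin_subset calculation by blast
    ultimately show "P (S \<inter> T)" unfolding P_def using openin_Int by blast
  next
    fix K assume K: "\<forall>S\<in>K. P S"
    define V0 where "V0 = \<Union>{V. openin W V \<and> \<phi> ` V \<in> K}"
    have oV0: "openin W V0" unfolding V0_def by (rule openin_Union) blast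
    have "\<Union>K \<subseteq> \<phi> ` V0"
    proof
      fix x assume "x \<in> \<Union>K"
      then obtain k where k: "k \<in> K" "x \<in> k" by blast
      then obtain V where "openin W V" "k = \<phi> ` V" using K unfolding P_def by blast
      then show "x \<in> \<phi> ` V0" using k unfolding V0_def by blast
    qed
    moreover have "\<phi> ` V0 \<subseteq> \<Union>K" unfolding V0_def by blast
    ultimately have "\<Union>K = \<phi> ` V0" by blast
    then show "P (\<Union>K)" unfolding P_def using oV0 by blast
  qed
  define W' where "W' = topology P"
  have oW': "openin W' U \<longleftrightarrow> P U" for U
    using top unfolding W'_def by (simp add: topology_inverse')
  have tW': "topspace W' = \<phi> ` topspace W"
    unfolding topspace_def oW' P_def by blast
  have "homeomorphic_map W W' \<phi>"
    unfolding homeomorphic_map_def quotient_map_def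
  proof (intro conjI allI impI inj)
    show "\<phi> ` topspace W = topspace W'" by (simp add: tW')
  next
    fix U assume U: "U \<subseteq> topspace W'"
    have eq: "\<phi> ` {x \<in> topspace W. \<phi> x \<in> U} = U" using U tW' by auto
    show "openin W {x \<in> topspace W. \<phi> x \<in> U} = openin W' U"
    proof
      assume "openin W {x \<in> topspace W. \<phi> x \<in> U}"
      then show "openin W' U" unfolding oW' P_def using eq by metis
    next
      assume "openin W' U"
      then obtain V where V: "openin W V" "U = \<phi> ` V" unfolding oW' P_def by blast
      have "{x \<in> topspace W. \<phi> x \<in> U} = V"
        using V openin_subset[OF V(1)] inj unfolding inj_on_def by blast
      then show "openin W {x \<in> topspace W. \<phi> x \<in> U}" using V by simp
    qed
  qed
  then show ?thesis by blast
qed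

lemma sep_card:
  fixes W :: "'d topology"
  assumes "separable_space W" "Hausdorff_space W"
  shows "\<exists>\<phi>::'d \<Rightarrow> nat set set. inj_on \<phi> (topspace W)"
proof -
  obtain D where D: "countable D" "D \<subseteq> topspace W" "W closure_of D = topspace W"
    using assms(1) unfolding separable_space_def by blast
  define e where "e = to_nat_on D"
  have einj: "inj_on e D" unfolding e_def using D(1) by (simp add: inj_on_to_nat_on)
  define \<phi> where "\<phi> = (\<lambda>z. {e ` (S \<inter> D) | S. openin W S \<and> z \<in> S})"
  have dense: "\<exists>d\<in>D. d \<in> Q" if "openin W Q" "x \<in> Q" for Q x
  proof -
    have "x \<in> topspace W" using openin_subset[OF that(1)] that(2) by blast
    then have "x \<in> W closure_of D" using D(3) by simp
    then show ?thesis using that unfolding in_closure_of by blast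
  qed
  have "inj_on \<phi> (topspace W)"
  proof (rule inj_onI, rule ccontr)
    fix z w assume z: "z \<in> topspace W" and w: "w \<in> topspace W" and eq: "\<phi> z = \<phi> w" and ne: "z \<noteq> w"
    obtain U V where UV: "openin W U" "openin W V" "z \<in> U" "w \<in> V" "disjnt U V"
      using assms(2) z w ne unfolding Hausdorff_space_def by blast
    have "e ` (U \<inter> D) \<in> \<phi> w" using eq UV unfolding \<phi>_def by blast
    then obtain S where S: "openin W S" "w \<in> S" "e ` (S \<inter> D) = e ` (U \<inter> D)"
      unfolding \<phi>_def by blast
    then have "S \<inter> D = U \<inter> D" using einj by (simp add: inj_on_image_eq_iff)
    moreover obtain d where "d \<in> D" "d \<in> S \<inter> V" using dense[of "S \<inter> V" w] S UV by blast
    ultimately show False using UV(5) unfolding disjnt_def by blast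
  qed
  then show ?thesis by blast
qed
lemma constr:
  fixes Y :: "'a topology" and T :: "'c topology" and g :: "'a \<Rightarrow> 'c"
  assumes g: "continuous_map Y T g" and ginj: "inj_on g (topspace Y)"
    and sep: "separable_space T" and H: "Hausdorff_space T"
  shows "\<exists>(W::('a + 'c \<times> nat) topology) S. separable_space W \<and> Hausdorff_space W \<and> S \<subseteq> topspace W \<and>
        Y homeomorphic_space subtopology W S"
proof -
  obtain D where D: "countable D" "D \<subseteq> topspace T" "T closure_of D = topspace T"
    using sep unfolding separable_space_def by blast
  have dense: "\<exists>d\<in>D. d \<in> Q" if "openin T Q" "x \<in> Q" for Q x
  proof -
    have "x \<in> topspace T" using openin_subset[OF that(1)] that(2) by blast
    then have "x \<in> T closure_of D" using D(3) by simp
    then show ?thesis using that unfolding in_closure_of by blast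
  qed
  define B where "B = (\<lambda>V U (n::nat). Inl ` {y\<in>topspace Y. g y \<in> V \<and> y \<in> U} \<union> Inr ` {(d,k). d \<in> V \<inter> D \<and> n \<le> k})"
  define F where "F = {s. (\<exists>V U n. openin T V \<and> openin Y U \<and> s = B V U n) \<or> (\<exists>d k. d \<in> D \<and> s = {Inr (d,k)})}"
  define W where "W = topology_generated_by F"
  have gT: "g y \<in> topspace T" if "y \<in> topspace Y" for y
    using continuous_map_image_subset_topspace[OF g] that by blast
  have Bopen: "openin W (B V U n)" if "openin T V" "openin Y U" for V U n
    unfolding W_def by (rule topology_generated_by_Basis) (use that F_def in blast)
  have Sopen: "openin W {Inr (d,k)}" if "d \<in> D" for d k
    unfolding W_def by (rule topology_generated_by_Basis) (use that F_def in blast)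
  have tW: "topspace W = Inl ` topspace Y \<union> Inr ` (D \<times> UNIV)"
  proof
    show "topspace W \<subseteq> Inl ` topspace Y \<union> Inr ` (D \<times> UNIV)"
      unfolding W_def topology_generated_by_topspace
    proof (rule Union_least)
      fix s assume "s \<in> F"
      then consider (a) V U n where "s = B V U n" | (b) d k where "d \<in> D" "s = {Inr (d,k)}"
        unfolding F_def by blast
      then show "s \<subseteq> Inl ` topspace Y \<union> Inr ` (D \<times> UNIV)"
      proof cases
        case a then show ?thesis unfolding B_def by auto
      qed auto
    qed
    have "B (topspace T) (topspace Y) 0 = Inl ` topspace Y \<union> Inr ` (D \<times> UNIV)"
      unfolding B_def using gT D(2) by auto
    then show "Inl ` topspace Y \<union> Inr ` (D \<times> UNIV) \<subseteq> topspace W"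
      using openin_subset[OF Bopen[OF openin_topspace openin_topspace, of 0]] by simp
  qed
  have inv: "\<forall>y. Inl y \<in> Q \<longrightarrow> (\<exists>V n. openin T V \<and> g y \<in> V \<and> (\<forall>d k. d \<in> V \<and> d \<in> D \<and> n \<le> k \<longrightarrow> Inr (d,k) \<in> Q))"
    if "generate_topology_on F Q" for Q
    using that
  proof (induction rule: generate_topology_on.induct)
    case Empty then show ?case by simp
  next
    case (Int a b)
    show ?case
    proof (intro allI impI)
      fix y assume y: "Inl y \<in> a \<inter> b"
      from y have ya: "Inl y \<in> a" by simp
      from y have yb: "Inl y \<in> b" by simp
      obtain V1 n1 where "openin T V1" "g y \<in> V1" "\<forall>d k. d \<in> V1 \<and> d \<in> D \<and> n1 \<le> k \<longrightarrow> Inr (d,k) \<in> a"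
        using Int.IH(1) ya by blast
      moreover obtain V2 n2 where "openin T V2" "g y \<in> V2" "\<forall>d k. d \<in> V2 \<and> d \<in> D \<and> n2 \<le> k \<longrightarrow> Inr (d,k) \<in> b"
        using Int.IH(2) yb by blast
      ultimately show "\<exists>V n. openin T V \<and> g y \<in> V \<and> (\<forall>d k. d \<in> V \<and> d \<in> D \<and> n \<le> k \<longrightarrow> Inr (d,k) \<in> a \<inter> b)"
        by (intro exI[of _ "V1 \<inter> V2"] exI[of _ "max n1 n2"]) auto
    qed
  next
    case (UN K)
    show ?case
    proof (intro allI impI)
      fix y assume "Inl y \<in> \<Union>K"
      then obtain k where k: "k \<in> K" "Inl y \<in> k" by blast
      obtain V n where "openin T V" "g y \<in> V" "\<forall>d j. d \<in> V \<and> d \<in> D \<and> n \<le> j \<longrightarrow> Inr (d,j) \<in> k"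
        using UN.IH[OF k(1)] k(2) by blast
      then show "\<exists>V n. openin T V \<and> g y \<in> V \<and> (\<forall>d j. d \<in> V \<and> d \<in> D \<and> n \<le> j \<longrightarrow> Inr (d,j) \<in> \<Union>K)"
        using k(1) by (intro exI[of _ V] exI[of _ n]) blast
    qed
  next
    case (Basis s)
    then consider (a) V U n where "openin T V" "s = B V U n" | (b) d k where "s = {Inr (d,k)}"
      unfolding F_def by blast
    then show ?case
    proof cases
      case a
      show ?thesis
      proof (intro allI impI)
        fix y assume "Inl y \<in> s"
        then have "g y \<in> V" using a unfolding B_def by auto
        then show "\<exists>V n. openin T V \<and> g y \<in> V \<and> (\<forall>d k. d \<in> V \<and> d \<in> D \<and> n \<le> k \<longrightarrow> Inr (d,k) \<in> s)"
          using a by (intro exI[of _ V] exI[of _ n]) (auto simp: B_def)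
      qed
    qed simp
  qed
  have separable: "separable_space W"
    unfolding separable_space_def
  proof (intro exI conjI)
    show "countable (Inr ` (D \<times> (UNIV::nat set)) :: ('a + 'c \<times> nat) set)" using D(1) by auto
    show "Inr ` (D \<times> UNIV) \<subseteq> topspace W" using tW by auto
    show "W closure_of Inr ` (D \<times> UNIV) = topspace W"
    proof (rule equalityI[OF closure_of_subset_topspace], rule subsetI)
      fix x assume x: "x \<in> topspace W"
      show "x \<in> W closure_of Inr ` (D \<times> UNIV)"
        unfolding in_closure_of
      proof (intro conjI x allI impI)
        fix Q assume Q: "x \<in> Q \<and> openin W Q"
        show "\<exists>y. y \<in> Inr ` (D \<times> UNIV) \<and> y \<in> Q"
        proof (cases x)
          case (Inl y)
          have "generate_topology_on F Q" using Q W_def openin_topology_generated_by by blast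
          from inv[OF this] Q Inl obtain V n where V: "openin T V" "g y \<in> V"
            "\<forall>d k. d \<in> V \<and> d \<in> D \<and> n \<le> k \<longrightarrow> Inr (d,k) \<in> Q" by blast
          then obtain d where "d \<in> D" "d \<in> V" using dense by blast
          then show ?thesis using V by blast
        next
          case (Inr p)
          then show ?thesis using Q x tW by auto
        qed
      qed
    qed
  qed
  have disjB: "disjnt (B V1 U1 n1) (B V2 U2 n2)" if "disjnt V1 V2" for V1 V2 U1 U2 n1 n2
    using that unfolding B_def disjnt_def by auto
  have Haus: "Hausdorff_space W"
    unfolding Hausdorff_space_def
  proof (intro allI impI)
    fix x z assume xz: "x \<in> topspace W \<and> z \<in> topspace W \<and> x \<noteq> z"
    have LR: "\<exists>U V. openin W U \<and> openin W V \<and> Inl a \<in> U \<and> Inr (d,k) \<in> V \<and> disjnt U V"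
      if "a \<in> topspace Y" "d \<in> D" for a d k
    proof (intro exI conjI)
      show "openin W (B (topspace T) (topspace Y) (Suc k))" by (rule Bopen) auto
      show "openin W {Inr (d,k)}" using Sopen that by blast
      show "Inl a \<in> B (topspace T) (topspace Y) (Suc k)" using that gT unfolding B_def by auto
      show "disjnt (B (topspace T) (topspace Y) (Suc k)) {Inr (d, k)}" unfolding B_def disjnt_def by auto
    qed auto
    show "\<exists>U V. openin W U \<and> openin W V \<and> x \<in> U \<and> z \<in> V \<and> disjnt U V"
    proof (cases x; cases z)
      fix a b assume xa: "x = Inl a" and zb: "z = Inl b"
      then have ab: "a \<in> topspace Y" "b \<in> topspace Y" "a \<noteq> b" using xz tW by auto
      then have "g a \<noteq> g b" using ginj unfolding inj_on_def by blast
      then obtain V1 V2 where V: "openin T V1" "openin T V2" "g a \<in> V1" "g b \<in> V2" "disjnt V1 V2"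
        using H gT ab unfolding Hausdorff_space_def by meson
      have o1: "openin W (B V1 (topspace Y) 0)" using Bopen V(1) by blast
      have o2: "openin W (B V2 (topspace Y) 0)" using Bopen V(2) by blast
      have i1: "x \<in> B V1 (topspace Y) 0" using xa V(3) ab unfolding B_def by auto
      have i2: "z \<in> B V2 (topspace Y) 0" using zb V(4) ab unfolding B_def by auto
      show ?thesis using o1 o2 i1 i2 disjB[OF V(5)] by blast
    next
      fix a p assume xa: "x = Inl a" and zb: "z = Inr p"
      then show ?thesis using LR[of a "fst p" "snd p"] xz tW by auto
    next
      fix p a assume xa: "x = Inr p" and zb: "z = Inl a"
      then obtain U V where "openin W U \<and> openin W V \<and> Inl a \<in> U \<and> Inr p \<in> V \<and> disjnt U V"
        using LR[of a "fst p" "snd p"] xz tW by auto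
      then show ?thesis using xa zb disjnt_sym by blast
    next
      fix p q assume xa: "x = Inr p" and zb: "z = Inr q"
      then show ?thesis using xz tW Sopen[of "fst p" "snd p"] Sopen[of "fst q" "snd q"]
        by (intro exI[of _ "{x}"] exI[of _ "{z}"]) auto
    qed
  qed
  have pre: "openin Y {y \<in> topspace Y. Inl y \<in> Q}" if "generate_topology_on F Q" for Q
    using that
  proof (induction rule: generate_topology_on.induct)
    case Empty then show ?case by simp
  next
    case (Int a b)
    have "{y \<in> topspace Y. Inl y \<in> a \<inter> b} = {y \<in> topspace Y. Inl y \<in> a} \<inter> {y \<in> topspace Y. Inl y \<in> b}" by auto
    then show ?case using Int.IH by auto
  next
    case (UN K)
    have "{y \<in> topspace Y. Inl y \<in> \<Union>K} = \<Union>((\<lambda>k. {y \<in> topspace Y. Inl y \<in> k}) ` K)" by auto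
    then show ?case using UN.IH by (metis (mono_tags, lifting) imageE openin_Union)
  next
    case (Basis s)
    then consider (a) V U n where "openin T V" "openin Y U" "s = B V U n" | (b) d k where "s = {Inr (d,k)}"
      unfolding F_def by blast
    then show ?case
    proof cases
      case a
      have "{y \<in> topspace Y. Inl y \<in> s} = {y \<in> topspace Y. g y \<in> V} \<inter> U"
        using a openin_subset[OF a(2)] unfolding B_def by auto
      then show ?thesis using a g by (simp add: continuous_map_def openin_Int)
    next
      case b then show ?thesis by simp
    qed
  qed
  define S where "S = (Inl ` topspace Y :: ('a + 'c \<times> nat) set)"
  have "homeomorphic_map Y (subtopology W S) Inl"
    unfolding homeomorphic_map_def quotient_map_def
  proof (intro conjI allI impI)
    show "Inl ` topspace Y = topspace (subtopology W S)" using tW S_def by auto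
    show "inj_on Inl (topspace Y)" by simp
  next
    fix U assume U: "U \<subseteq> topspace (subtopology W S)"
    then have US: "U \<subseteq> S" by auto
    show "openin Y {x \<in> topspace Y. Inl x \<in> U} = openin (subtopology W S) U"
    proof
      assume o: "openin Y {x \<in> topspace Y. Inl x \<in> U}"
      have "U = B (topspace T) {x \<in> topspace Y. Inl x \<in> U} 0 \<inter> S"
        using US gT unfolding B_def S_def by auto
      then show "openin (subtopology W S) U"
        using Bopen[OF _ o, of "topspace T" 0] by (metis openin_subtopology openin_topspace)
    next
      assume "openin (subtopology W S) U"
      then obtain Q where Q: "openin W Q" "U = Q \<inter> S" by (auto simp: openin_subtopology)
      have "{x \<in> topspace Y. Inl x \<in> U} = {x \<in> topspace Y. Inl x \<in> Q}" using Q S_def by auto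
      then show "openin Y {x \<in> topspace Y. Inl x \<in> U}"
        using pre Q(1) W_def openin_topology_generated_by by metis
    qed
  qed
  then have "Y homeomorphic_space subtopology W S" by (rule homeomorphic_map_imp_homeomorphic_space)
  moreover have "S \<subseteq> topspace W" using tW S_def by auto
  ultimately show ?thesis using separable Haus by blast
qed
lemma embeds_transfer:
  assumes "embeds_in_sep_Hausdorff TYPE('d) Y"
  shows "embeds_in_sep_Hausdorff TYPE(nat set set) Y"
proof -
  obtain W :: "'d topology" and S where W: "separable_space W" "Hausdorff_space W" "S \<subseteq> topspace W"
    "Y homeomorphic_space subtopology W S"
    using assms unfolding embeds_in_sep_Hausdorff_def by blast
  obtain \<phi> :: "'d \<Rightarrow> nat set set" where inj: "inj_on \<phi> (topspace W)" using sep_card W by blast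
  obtain W' :: "nat set set topology" where h: "homeomorphic_map W W' \<phi>" using transfer_top[OF inj] by blast
  have hs: "W homeomorphic_space W'" using h homeomorphic_map_imp_homeomorphic_space by blast
  have sW': "separable_space W'" using hs W homeomorphic_separable_space by blast
  have hW': "Hausdorff_space W'" using hs W homeomorphic_Hausdorff_space by blast
  have surj: "\<phi> ` topspace W = topspace W'" by (rule homeomorphic_imp_surjective_map[OF h])
  have sub: "\<phi> ` S \<subseteq> topspace W'" using surj W(3) by (metis image_mono)
  have "homeomorphic_map (subtopology W S) (subtopology W' (\<phi> ` S)) \<phi>"
  proof (rule homeomorphic_map_subtopologies[OF h])
    show "\<phi> ` (topspace W \<inter> S) = topspace W' \<inter> \<phi> ` S"
      using surj W(3) by (metis Int_absorb1 image_mono)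
  qed
  then have "subtopology W S homeomorphic_space subtopology W' (\<phi> ` S)"
    by (rule homeomorphic_map_imp_homeomorphic_space)
  then have hY: "Y homeomorphic_space subtopology W' (\<phi> ` S)"
    using W(4) homeomorphic_space_trans by blast
  show ?thesis unfolding embeds_in_sep_Hausdorff_def
    by (intro exI[of _ W'] exI[of _ "\<phi> ` S"]) (simp add: sW' hW' sub hY)
qed

theorem mainTheorem18:
  fixes Y :: "'a topology" and X :: "'b topology" and i :: "'a \<Rightarrow> 'b"
  assumes "continuous_map Y X i"
    and "bij_betw i (topspace Y) (topspace X)"
    and "embeds_in_sep_Hausdorff TYPE('c) X"
  shows "embeds_in_sep_Hausdorff TYPE(nat set set) Y"
proof -
  obtain Z :: "'c topology" and S where Z: "separable_space Z" "Hausdorff_space Z" "S \<subseteq> topspace Z"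
    "X homeomorphic_space subtopology Z S"
    using assms(3) unfolding embeds_in_sep_Hausdorff_def by blast
  obtain h where h: "homeomorphic_map X (subtopology Z S) h" using Z(4) homeomorphic_space by blast
  have c: "continuous_map Y Z (h \<circ> i)"
    using continuous_map_compose[OF assms(1) homeomorphic_imp_continuous_map[OF h]]
    continuous_map_in_subtopology by blast
  have "inj_on (h \<circ> i) (topspace Y)"
    using assms(2) h unfolding homeomorphic_map_def bij_betw_def
    by (simp add: comp_inj_on)
  then obtain W :: "('a + 'c \<times> nat) topology" and T where
    WT: "separable_space W" "Hausdorff_space W" "T \<subseteq> topspace W" "Y homeomorphic_space subtopology W T"
    using constr[OF c _ Z(1) Z(2)] by metis
  then have "embeds_in_sep_Hausdorff TYPE('a + 'c \<times> nat) Y"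
    unfolding embeds_in_sep_Hausdorff_def by (intro exI[of _ W] exI[of _ T]) simp
  then show ?thesis by (rule embeds_transfer)
qed

end
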